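(* Let $A\in\mathbb{R}^{m\times n}$ and let $A=P_1-R_1+S_1=P_2-R_2+S_2$ be two double proper weak splittings of $A$. Let $\widehat{A}=(I-S_2P_1^{\dagger})A$ and $\widehat{P}=P_2$. If $\widehat{A}^{\dagger}\widehat{P}\geq 0$, $N(S_2)\supseteq N(P_2)$, $R(S_2)\subseteq R(P_2)$ and $1\notin\sigma(S_2P_1^{\dagger})$, then $\rho(W_{12})<1$, where $$W_{12}=\begin{pmatrix} P_2^{\dagger}R_2-P_2^{\dagger}S_2P_1^{\dagger}R_1 & P_2^{\dagger}S_2P_1^{\dagger}S_1\\ I & 0\end{pmatrix}.$$
   Context: For $M\in\mathbb{R}^{m\times n}$, $M^{\dagger}$ is its Moore–Penrose inverse, $R(M)$, $N(M)$ its range and null space; inequalities are entrywise; $\rho$ is the spectral radius, $\sigma$ the spectrum. A double splitting $A=P-R+S$ ($P,R,S\in\mathbb{R}^{m\times n}$) is a double proper splitting if $R(P)=R(A)$ and $N(P)=N(A)$; it is a double proper weak splitting if moreover $P^{\dagger}R\geq 0$ and $P^{\dagger}S\leq 0$. *)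

theory Defs
  imports "Jordan_Normal_Form.Spectral_Radius" "Jordan_Normal_Form.Matrix_Kernel"
begin

definition is_moore_penrose :: "real mat \<Rightarrow> real mat \<Rightarrow> bool" where
  "is_moore_penrose M X \<longleftrightarrow>
     X \<in> carrier_mat (dim_col M) (dim_row M) \<and>
     M * X * M = M \<and> X * M * X = X \<and>
     transpose_mat (M * X) = M * X \<and> transpose_mat (X * M) = X * M"

definition mp_inverse :: "real mat \<Rightarrow> real mat" where
  "mp_inverse M = (THE X. is_moore_penrose M X)"

definition mat_range :: "real mat \<Rightarrow> real vec set" where
  "mat_range M = {M *\<^sub>v x | x. x \<in> carrier_vec (dim_col M)}"

definition mat_null :: "real mat \<Rightarrow> real vec set" where
  "mat_null M = mat_kernel M"

definition mat_nonneg :: "real mat \<Rightarrow> bool" where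
  "mat_nonneg M \<longleftrightarrow> (\<forall>i < dim_row M. \<forall>j < dim_col M. M $$ (i,j) \<ge> 0)"

definition mat_nonpos :: "real mat \<Rightarrow> bool" where
  "mat_nonpos M \<longleftrightarrow> (\<forall>i < dim_row M. \<forall>j < dim_col M. M $$ (i,j) \<le> 0)"

definition double_proper_splitting :: "real mat \<Rightarrow> real mat \<Rightarrow> real mat \<Rightarrow> real mat \<Rightarrow> bool" where
  "double_proper_splitting A P R S \<longleftrightarrow>
     P \<in> carrier_mat (dim_row A) (dim_col A) \<and>
     R \<in> carrier_mat (dim_row A) (dim_col A) \<and>
     S \<in> carrier_mat (dim_row A) (dim_col A) \<and>
     A = P - R + S \<and> mat_range P = mat_range A \<and> mat_null P = mat_null A"

definition double_proper_weak_splitting :: "real mat \<Rightarrow> real mat \<Rightarrow> real mat \<Rightarrow> real mat \<Rightarrow> bool" where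
  "double_proper_weak_splitting A P R S \<longleftrightarrow>
     double_proper_splitting A P R S \<and>
     mat_nonneg (mp_inverse P * R) \<and> mat_nonpos (mp_inverse P * S)"

definition cmat :: "real mat \<Rightarrow> complex mat" where
  "cmat M = map_mat complex_of_real M"

end

theory Submission
  imports Defs
begin

lemma mat_ext_vec:
  fixes M N :: "'a::comm_ring_1 mat"
  assumes M: "M \<in> carrier_mat r c" and N: "N \<in> carrier_mat r c"
    and eq: "\<And>x. x \<in> carrier_vec c \<Longrightarrow> M *\<^sub>v x = N *\<^sub>v x"
  shows "M = N"
proof (rule eq_matI)
  fix i j assume i: "i < dim_row N" and j: "j < dim_col N"
  have "(M *\<^sub>v unit_vec c j) $ i = (N *\<^sub>v unit_vec c j) $ i" using eq by simp
  thus "M $$ (i,j) = N $$ (i,j)" using i j M N by simp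
qed (use M N in auto)

lemma mp_facts:
  fixes M X :: "real mat"
  assumes mp: "is_moore_penrose M X" and M: "M \<in> carrier_mat r c"
  shows "X \<in> carrier_mat c r"
    "X = X * (transpose_mat X * transpose_mat M)"
    "transpose_mat M = transpose_mat M * (M * X)"
    "X = transpose_mat M * (transpose_mat X * X)"
    "transpose_mat M = X * (M * transpose_mat M)"
proof -
  have X: "X \<in> carrier_mat c r" using mp M unfolding is_moore_penrose_def by auto
  thus "X \<in> carrier_mat c r" .
  have 1: "M * X * M = M" "X * M * X = X" "transpose_mat (M * X) = M * X" "transpose_mat (X * M) = X * M"
    using mp unfolding is_moore_penrose_def by auto
  have "X = X * (M * X)" using 1(2) X M by simp
  also have "\<dots> = X * transpose_mat (M * X)" using 1(3) by simp
  also have "\<dots> = X * (transpose_mat X * transpose_mat M)" using transpose_mult[OF M X] by simp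
  finally show "X = X * (transpose_mat X * transpose_mat M)" .
  have "transpose_mat M = transpose_mat (M * X * M)" using 1 by simp
  also have "\<dots> = transpose_mat M * transpose_mat (M * X)" using transpose_mult[OF mult_carrier_mat[OF M X] M] by simp
  also have "\<dots> = transpose_mat M * (M * X)" using 1 by simp
  finally show "transpose_mat M = transpose_mat M * (M * X)" .
  have "X = (X * M) * X" using 1(2) X M by simp
  also have "\<dots> = transpose_mat (X * M) * X" using 1(4) by simp
  also have "\<dots> = transpose_mat M * (transpose_mat X * X)" using transpose_mult[OF X M] X M by simp
  finally show "X = transpose_mat M * (transpose_mat X * X)" .
  have "transpose_mat M = transpose_mat (M * (X * M))" using 1 X M by simp
  also have "\<dots> = transpose_mat (X * M) * transpose_mat M" using transpose_mult[OF M mult_carrier_mat[OF X M]] by simp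
  also have "\<dots> = X * (M * transpose_mat M)" using 1 X M by simp
  finally show "transpose_mat M = X * (M * transpose_mat M)" .
qed

lemma mp_unique:
  fixes M X Y :: "real mat"
  assumes mpX: "is_moore_penrose M X" and mpY: "is_moore_penrose M Y" and M: "M \<in> carrier_mat r c"
  shows "X = Y"
proof -
  note fx = mp_facts[OF mpX M] and fy = mp_facts[OF mpY M]
  have X: "X \<in> carrier_mat c r" and Y: "Y \<in> carrier_mat c r" using fx fy by auto
  have XT: "transpose_mat X \<in> carrier_mat r c" "transpose_mat Y \<in> carrier_mat r c"
    "transpose_mat M \<in> carrier_mat c r" using X Y M by auto
  have "X = X * (transpose_mat X * (transpose_mat M * (M * Y)))" using fx(2) fy(3) by metis
  also have "\<dots> = X * (transpose_mat X * transpose_mat M) * (M * Y)"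
    using assoc_mult_mat[OF X mult_carrier_mat[OF XT(1) XT(3)] mult_carrier_mat[OF M Y]]
      assoc_mult_mat[OF XT(1) XT(3) mult_carrier_mat[OF M Y]] by simp
  also have "\<dots> = X * (M * Y)" using fx(2) by metis
  finally have a: "X = X * (M * Y)" .
  have "Y = X * (M * transpose_mat M) * (transpose_mat Y * Y)" using fx(5) fy(4) by metis
  also have "\<dots> = X * (M * (transpose_mat M * (transpose_mat Y * Y)))"
    using assoc_mult_mat[OF X mult_carrier_mat[OF M XT(3)] mult_carrier_mat[OF XT(2) Y]]
      assoc_mult_mat[OF M XT(3) mult_carrier_mat[OF XT(2) Y]] by simp
  also have "\<dots> = X * (M * Y)" using fy(4) by metis
  finally show ?thesis using a by simp
qed

lemma massoc: "dim_col A = dim_row B \<Longrightarrow> dim_col B = dim_row C \<Longrightarrow> A * B * C = A * (B * C)"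
  by (rule assoc_mult_mat[of A "dim_row A" "dim_col A" B "dim_col B" C "dim_col C"], auto)

lemma massocv: "dim_col A = dim_row B \<Longrightarrow> dim_col B = dim_vec v \<Longrightarrow> (A * B) *\<^sub>v v = A *\<^sub>v (B *\<^sub>v v)"
  by (rule assoc_mult_mat_vec[of A "dim_row A" "dim_col A" B "dim_col B" v], auto)

lemma vec_minus_zero:
  fixes a b :: "'a :: ab_group_add vec"
  assumes a: "a \<in> carrier_vec n" and b: "b \<in> carrier_vec n" and e: "a - b = 0\<^sub>v n"
  shows "a = b"
proof (rule eq_vecI)
  fix i assume "i < dim_vec b"
  hence i: "i < n" using b by auto
  have "(a - b) $ i = 0" using e i by simp
  thus "a $ i = b $ i" using i a b by simp
qed (use a b in auto)

lemma g_inverse_exists: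
  fixes M :: "real mat" assumes M: "M \<in> carrier_mat r c"
  shows "\<exists>G \<in> carrier_mat c r. M * G * M = M"
proof -
  obtain C where C_def: "gauss_jordan_single M = C" by blast
  note gj = gauss_jordan_single[OF M C_def]
  from gj(4) obtain P Q where PQ: "C = P * M" "P \<in> carrier_mat r r" "Q \<in> carrier_mat r r"
    "P * Q = 1\<^sub>m r" "Q * P = 1\<^sub>m r" by blast
  have C: "C \<in> carrier_mat r c" using gj(2) .
  from gj(3) C obtain f where f: "pivot_fun C f c" unfolding row_echelon_form_def by auto
  have dC: "dim_row C = r" using C by auto
  note pf = pivot_funD[OF dC f]
  define H :: "real mat" where "H = mat c r (\<lambda>(j,i). if f i < c \<and> j = f i then 1 else 0)"
  have H: "H \<in> carrier_mat c r" unfolding H_def by auto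
  have CH: "C * H = mat r r (\<lambda>(i,k). if f k < c \<and> i = k then 1 else 0)"
  proof (rule eq_matI)
    fix i k assume i: "i < dim_row (mat r r (\<lambda>(i,k). if f k < c \<and> i = k then 1 else (0::real)))"
      and k: "k < dim_col (mat r r (\<lambda>(i,k). if f k < c \<and> i = k then 1 else (0::real)))"
    hence i: "i < r" and k: "k < r" by auto
    have "(C * H) $$ (i,k) = (\<Sum>j\<in>{0..<c}. C $$ (i,j) * H $$ (j,k))"
      using C H i k by (simp add: scalar_prod_def)
    also have "\<dots> = (\<Sum>j\<in>{0..<c}. if j = f k then (if f k < c then C $$ (i,j) else 0) else 0)"
      using k by (intro sum.cong, auto simp: H_def)
    also have "\<dots> = (if f k < c then C $$ (i, f k) else 0)" by (simp add: sum.delta)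
    also have "\<dots> = (if f k < c \<and> i = k then 1 else 0)"
      using pf(4)[OF k] pf(5)[OF k _ i] by auto
    finally show "(C * H) $$ (i,k) = mat r r (\<lambda>(i,k). if f k < c \<and> i = k then 1 else (0::real)) $$ (i,k)"
      using i k by simp
  qed (use C H in auto)
  have CHC: "C * H * C = C"
  proof (rule eq_matI)
    fix i l assume i: "i < dim_row C" and l: "l < dim_col C"
    hence i: "i < r" and l: "l < c" using C by auto
    have "(C * H * C) $$ (i,l) = (\<Sum>k\<in>{0..<r}. (C * H) $$ (i,k) * C $$ (k,l))"
      using C H i l by (simp add: scalar_prod_def del: assoc_mult_mat)
    also have "\<dots> = (\<Sum>k\<in>{0..<r}. if k = i then (if f i < c then C $$ (i,l) else 0) else 0)"
      using i by (intro sum.cong, auto simp: CH)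
    also have "\<dots> = (if f i < c then C $$ (i,l) else 0)" using i by (simp add: sum.delta)
    also have "\<dots> = C $$ (i,l)"
    proof (cases "f i < c")
      case False
      hence "f i = c" using pf(1)[OF i] by auto
      thus ?thesis using pf(2)[OF i, of l] l by auto
    qed auto
    finally show "(C * H * C) $$ (i,l) = C $$ (i,l)" .
  qed (use C H in auto)
  have "M * (H * P) * M = M"
  proof -
    have "M = Q * C" using PQ M by (simp add: assoc_mult_mat[symmetric, of Q r r P r M c])
    then have "M * (H * P) * M = Q * C * (H * P) * (Q * C)" by metis
    also have "\<dots> = Q * (C * (H * (P * (Q * C))))" using PQ(2-5) C H by (simp add: massoc carrier_matD del: assoc_mult_mat)
    also have "P * (Q * C) = C" using massoc[of P Q C] PQ(2-5) C by (simp add: carrier_matD)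
    also have "Q * (C * (H * C)) = Q * C" using CHC C H by (simp add: massoc carrier_matD del: assoc_mult_mat)
    also have "\<dots> = M" using \<open>M = Q * C\<close> by simp
    finally show ?thesis .
  qed
  thus ?thesis using H PQ by (intro bexI[of _ "H * P"], auto)
qed

lemma mtrans: "dim_col A = dim_row (B :: 'a :: comm_semiring_0 mat) \<Longrightarrow> transpose_mat (A * B) = transpose_mat B * transpose_mat A"
  by (rule transpose_mult[of A "dim_row A" "dim_col A" B "dim_col B"], auto)

lemma tt_zero:
  fixes D :: "real mat"
  assumes "transpose_mat D * D = 0\<^sub>m (dim_col D) (dim_col D)"
  shows "D = 0\<^sub>m (dim_row D) (dim_col D)"
proof (rule eq_matI)
  fix i j assume i: "i < dim_row (0\<^sub>m (dim_row D) (dim_col D) :: real mat)"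
    and j: "j < dim_col (0\<^sub>m (dim_row D) (dim_col D) :: real mat)"
  hence i: "i < dim_row D" and j: "j < dim_col D" by auto
  have "(transpose_mat D * D) $$ (j,j) = 0" using assms j by simp
  hence "(\<Sum>k\<in>{0..<dim_row D}. D $$ (k,j) * D $$ (k,j)) = 0"
    using j by (simp add: scalar_prod_def)
  hence "\<forall>k\<in>{0..<dim_row D}. D $$ (k,j) * D $$ (k,j) = 0"
    by (subst sum_nonneg_eq_0_iff[symmetric], auto)
  thus "D $$ (i,j) = 0\<^sub>m (dim_row D) (dim_col D) $$ (i,j)" using i j by auto
qed auto

lemma inv13_exists:
  fixes M :: "real mat" assumes M: "M \<in> carrier_mat r c"
  shows "\<exists>X \<in> carrier_mat c r. M * X * M = M \<and> transpose_mat (M * X) = M * X"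
proof -
  define K where "K = transpose_mat M * M"
  have K: "K \<in> carrier_mat c c" using M unfolding K_def by auto
  obtain G where G: "G \<in> carrier_mat c c" and KGK: "K * G * K = K" using g_inverse_exists[OF K] by blast
  have dM: "dim_row M = r" "dim_col M = c" and dK: "dim_row K = c" "dim_col K = c"
    and dG: "dim_row G = c" "dim_col G = c" using M K G by auto
  note ds = dM dK dG
  have KT: "transpose_mat K = K" unfolding K_def using ds by (simp add: mtrans)
  have KGTK: "K * transpose_mat G * K = K"
  proof -
    have "transpose_mat (K * G * K) = K" using KGK KT by simp
    thus ?thesis using KT ds by (simp add: mtrans massoc del: assoc_mult_mat)
  qed
  define S where "S = transpose_mat G * K * G"
  have dS: "dim_row S = c" "dim_col S = c" unfolding S_def using ds by auto
  have ST: "transpose_mat S = S" unfolding S_def using ds KT by (simp add: mtrans massoc del: assoc_mult_mat)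
  have KSK: "K * S * K = K"
  proof -
    have "K * S * K = (K * transpose_mat G * K) * G * K" unfolding S_def using ds
      by (simp add: massoc del: assoc_mult_mat)
    also have "\<dots> = K" using KGTK KGK by simp
    finally show ?thesis .
  qed
  define X where "X = S * transpose_mat M"
  have X: "X \<in> carrier_mat c r" unfolding X_def using dS ds by auto
  have dX: "dim_row X = c" "dim_col X = r" using X by auto
  define D where "D = M * X * M - M"
  have dD: "dim_row D = r" "dim_col D = c" unfolding D_def using ds dX by auto
  have D2: "D = M * (X * M - 1\<^sub>m c)"
    unfolding D_def using ds dX
    by (subst mult_minus_distrib_mat[of M r c "X * M" c "1\<^sub>m c"], auto intro: carrier_matI simp: massoc)
  have MTD: "transpose_mat M * D = 0\<^sub>m c c"
  proof -
    have "transpose_mat M * D = transpose_mat M * (M * X * M) - transpose_mat M * M"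
      unfolding D_def using ds dX
      by (subst mult_minus_distrib_mat[of _ c r], auto intro: carrier_matI)
    also have "transpose_mat M * (M * X * M) = K * S * K"
      unfolding K_def X_def using ds dS by (simp add: massoc del: assoc_mult_mat)
    finally show ?thesis using KSK K unfolding K_def by simp
  qed
  have "transpose_mat D * D = 0\<^sub>m c c"
  proof -
    have "transpose_mat D * D = transpose_mat (X * M - 1\<^sub>m c) * (transpose_mat M * D)"
      apply (subst (1) D2) using ds dX dD by (simp add: mtrans massoc del: assoc_mult_mat)
    also have "\<dots> = 0\<^sub>m c c" using MTD ds dX by simp
    finally show ?thesis .
  qed
  hence "D = 0\<^sub>m r c" using tt_zero[of D] dD by simp
  hence D0: "\<And>i j. i < r \<Longrightarrow> j < c \<Longrightarrow> D $$ (i,j) = 0" by simp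
  have MXM: "M * X * M = M"
  proof (rule eq_matI)
    fix i j assume "i < dim_row M" "j < dim_col M"
    thus "(M * X * M) $$ (i,j) = M $$ (i,j)" using D0[of i j] ds dX unfolding D_def by simp
  qed (use ds dX in auto)
  have "transpose_mat (M * X) = M * X"
    unfolding X_def using ds dS ST by (simp add: mtrans massoc del: assoc_mult_mat)
  thus ?thesis using MXM X by blast
qed

lemma mp_exists:
  fixes M :: "real mat" assumes M: "M \<in> carrier_mat r c"
  shows "is_moore_penrose M (mp_inverse M)"
proof -
  obtain X1 where X1: "X1 \<in> carrier_mat c r" and a: "M * X1 * M = M" and c: "transpose_mat (M * X1) = M * X1"
    using inv13_exists[OF M] by blast
  have MT: "transpose_mat M \<in> carrier_mat c r" using M by simp
  obtain X' where X': "X' \<in> carrier_mat r c" and a': "transpose_mat M * X' * transpose_mat M = transpose_mat M"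
    and c': "transpose_mat (transpose_mat M * X') = transpose_mat M * X'"
    using inv13_exists[OF MT] by blast
  define Y where "Y = transpose_mat X'"
  have ds: "dim_row M = r" "dim_col M = c" "dim_row X1 = c" "dim_col X1 = r" "dim_row Y = c" "dim_col Y = r"
    "dim_row X' = r" "dim_col X' = c"
    using M X1 X' unfolding Y_def by auto
  have b: "M * Y * M = M"
  proof -
    have "transpose_mat (transpose_mat M * X' * transpose_mat M) = M" using a' by simp
    thus ?thesis unfolding Y_def using ds by (simp add: mtrans massoc del: assoc_mult_mat)
  qed
  have d: "transpose_mat (Y * M) = Y * M"
  proof -
    have "transpose_mat (Y * M) = transpose_mat M * X'" unfolding Y_def using ds by (simp add: mtrans)
    also have "\<dots> = transpose_mat (transpose_mat M * X')" using c' by simp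
    also have "\<dots> = Y * M" unfolding Y_def using ds by (simp add: mtrans)
    finally show ?thesis .
  qed
  define X where "X = Y * M * X1"
  have dX: "dim_row X = c" "dim_col X = r" unfolding X_def using ds by auto
  have 1: "M * X * M = M"
  proof -
    have "M * X * M = (M * Y * M) * X1 * M" unfolding X_def using ds by (simp add: massoc del: assoc_mult_mat)
    also have "\<dots> = M" using a b by simp
    finally show ?thesis .
  qed
  have 2: "X * M * X = X"
  proof -
    have "X * M * X = Y * (M * X1 * M) * Y * M * X1" unfolding X_def using ds by (simp add: massoc del: assoc_mult_mat)
    also have "\<dots> = Y * (M * Y * M) * X1" using a ds by (simp add: massoc del: assoc_mult_mat)
    also have "\<dots> = X" using b unfolding X_def by simp
    finally show ?thesis .
  qed
  have MX: "M * X = M * X1"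
  proof -
    have "M * X = (M * Y * M) * X1" unfolding X_def using ds by (simp add: massoc del: assoc_mult_mat)
    thus ?thesis using b by simp
  qed
  have XM: "X * M = Y * M"
  proof -
    have "X * M = Y * (M * X1 * M)" unfolding X_def using ds by (simp add: massoc del: assoc_mult_mat)
    thus ?thesis using a by simp
  qed
  have mp: "is_moore_penrose M X" unfolding is_moore_penrose_def using 1 2 MX XM c d dX ds
    by (auto intro: carrier_matI)
  have "\<exists>!X. is_moore_penrose M X" using mp mp_unique[OF _ _ M] by blast
  thus ?thesis unfolding mp_inverse_def by (rule theI')
qed

lemma mp_absorb:
  fixes M N X Y :: "real mat"
  assumes M: "M \<in> carrier_mat r c" and N: "N \<in> carrier_mat r' c"
    and mpX: "is_moore_penrose M X" and mpY: "is_moore_penrose N Y"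
    and ker: "\<And>x. x \<in> carrier_vec c \<Longrightarrow> N *\<^sub>v x = 0\<^sub>v r' \<Longrightarrow> M *\<^sub>v x = 0\<^sub>v r"
  shows "X * M = X * M * (Y * N)"
proof -
  have X: "X \<in> carrier_mat c r" and Y: "Y \<in> carrier_mat c r'" using mpX mpY M N unfolding is_moore_penrose_def by auto
  have NYN: "N * Y * N = N" using mpY unfolding is_moore_penrose_def by auto
  show ?thesis
  proof (rule mat_ext_vec[of _ c c])
    fix x :: "real vec" assume x: "x \<in> carrier_vec c"
    have "N *\<^sub>v (x - Y *\<^sub>v (N *\<^sub>v x)) = N *\<^sub>v x - (N * Y * N) *\<^sub>v x"
      using x N Y by (simp add: mult_minus_distrib_mat_vec[of N r' c] massocv carrier_matD carrier_vecD)
    also have "\<dots> = 0\<^sub>v r'" using NYN N x by simp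
    finally have "M *\<^sub>v (x - Y *\<^sub>v (N *\<^sub>v x)) = 0\<^sub>v r" using ker x Y N by simp
    hence e: "M *\<^sub>v x - M *\<^sub>v (Y *\<^sub>v (N *\<^sub>v x)) = 0\<^sub>v r" using x Y N M
      by (simp add: mult_minus_distrib_mat_vec[of M r c])
    have "M *\<^sub>v x = M *\<^sub>v (Y *\<^sub>v (N *\<^sub>v x))"
      by (rule vec_minus_zero[of _ r, OF _ _ e]) (use x Y N M in auto)
    thus "(X * M) *\<^sub>v x = (X * M * (Y * N)) *\<^sub>v x" using x X Y M N
      by (simp add: massocv carrier_matD carrier_vecD)
  qed (use X Y M N in auto)
qed

lemma mp_proj_eq:
  fixes M N X Y :: "real mat"
  assumes M: "M \<in> carrier_mat r c" and N: "N \<in> carrier_mat r' c"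
    and mpX: "is_moore_penrose M X" and mpY: "is_moore_penrose N Y"
    and ker: "\<And>x. x \<in> carrier_vec c \<Longrightarrow> N *\<^sub>v x = 0\<^sub>v r' \<longleftrightarrow> M *\<^sub>v x = 0\<^sub>v r"
  shows "X * M = Y * N"
proof -
  have X: "X \<in> carrier_mat c r" and Y: "Y \<in> carrier_mat c r'" using mpX mpY M N unfolding is_moore_penrose_def by auto
  have 1: "X * M = X * M * (Y * N)" by (rule mp_absorb[OF M N mpX mpY], use ker in auto)
  have 2: "Y * N = Y * N * (X * M)" by (rule mp_absorb[OF N M mpY mpX], use ker in auto)
  have s1: "transpose_mat (X * M) = X * M" and s2: "transpose_mat (Y * N) = Y * N"
    using mpX mpY unfolding is_moore_penrose_def by auto
  have "X * M = transpose_mat (X * M * (Y * N))" using 1 s1 by simp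
  also have "\<dots> = transpose_mat (Y * N) * transpose_mat (X * M)" using X Y M N
    by (intro mtrans, auto)
  also have "\<dots> = Y * N * (X * M)" using s1 s2 by simp
  also have "\<dots> = Y * N" using 2 by simp
  finally show ?thesis .
qed

lemma nonneg_mv:
  fixes M :: "real mat" and v :: "real vec"
  assumes "M \<in> carrier_mat n n" "v \<in> carrier_vec n" "\<forall>i<n. \<forall>j<n. M $$ (i,j) \<ge> 0" "\<forall>i<n. v $ i \<ge> 0" "i < n"
  shows "(M *\<^sub>v v) $ i \<ge> 0"
  using assms by (auto simp: scalar_prod_def intro!: sum_nonneg)

lemma lemL:
  fixes D T Q :: "real mat" and y :: "real vec"
  assumes D: "D \<in> carrier_mat n n" and T: "T \<in> carrier_mat n n" and Q: "Q \<in> carrier_mat n n"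
    and Dnn: "\<forall>i<n. \<forall>j<n. D $$ (i,j) \<ge> 0" and Tnn: "\<forall>i<n. \<forall>j<n. T $$ (i,j) \<ge> 0"
    and TD: "T * D = T - Q" and QD: "Q * D = D"
    and y: "y \<in> carrier_vec n" and ynn: "\<forall>i<n. y $ i \<ge> 0" and Dy: "\<forall>i<n. (D *\<^sub>v y) $ i \<ge> y $ i"
  shows "\<forall>i<n. y $ i = 0"
proof -
  define w where "w = D *\<^sub>v y"
  have w: "w \<in> carrier_vec n" unfolding w_def using D y by auto
  have Dw: "\<forall>i<n. (D *\<^sub>v w) $ i \<ge> w $ i"
  proof (intro allI impI)
    fix i assume i: "i < n"
    have "w $ i = (\<Sum>j\<in>{0..<n}. D $$ (i,j) * y $ j)" unfolding w_def using D y i by (simp add: scalar_prod_def)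
    also have "\<dots> \<le> (\<Sum>j\<in>{0..<n}. D $$ (i,j) * w $ j)"
      using Dnn Dy i unfolding w_def by (intro sum_mono mult_left_mono, auto)
    also have "\<dots> = (D *\<^sub>v w) $ i" using D w i by (simp add: scalar_prod_def)
    finally show "(D *\<^sub>v w) $ i \<ge> w $ i" .
  qed
  define z where "z = D *\<^sub>v w - w"
  have z: "z \<in> carrier_vec n" unfolding z_def using D w by auto
  have znn: "\<forall>i<n. z $ i \<ge> 0" unfolding z_def using Dw D w by auto
  have Qw: "Q *\<^sub>v w = w" unfolding w_def using QD Q D y by (simp add: massocv[symmetric] carrier_matD carrier_vecD)
  have "T *\<^sub>v z = T *\<^sub>v (D *\<^sub>v w) - T *\<^sub>v w" unfolding z_def
    using T D w by (simp add: mult_minus_distrib_mat_vec[of T n n])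
  also have "T *\<^sub>v (D *\<^sub>v w) = (T - Q) *\<^sub>v w" using TD T D w
    by (simp add: massocv[symmetric] carrier_matD carrier_vecD)
  also have "\<dots> = T *\<^sub>v w - w" using T Q w Qw by (simp add: minus_mult_distrib_mat_vec[of T n n])
  finally have Tz: "T *\<^sub>v z = T *\<^sub>v w - w - T *\<^sub>v w" .
  show ?thesis
  proof (intro allI impI)
    fix i assume i: "i < n"
    have "(T *\<^sub>v z) $ i \<ge> 0" by (rule nonneg_mv[OF T z Tnn znn i])
    moreover have "(T *\<^sub>v z) $ i = - w $ i" using Tz i T w by simp
    moreover have "w $ i \<ge> y $ i" using Dy i unfolding w_def by auto
    ultimately show "y $ i = 0" using ynn i by auto
  qed
qed

lemma sum_double:
  fixes n :: nat and f :: "nat \<Rightarrow> 'a :: comm_monoid_add"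
  shows
  "(\<Sum>j\<in>{0..<n+n}. f j) = (\<Sum>j\<in>{0..<n}. f j) + (\<Sum>j\<in>{0..<n}. f (n+j))"
proof -
  have "(\<Sum>j\<in>{0..<n+n}. f j) = (\<Sum>j\<in>{0..<n}. f j) + (\<Sum>j\<in>{n..<n+n}. f j)"
    using sum.atLeastLessThan_concat[of 0 n "n+n" f] by simp
  also have "(\<Sum>j\<in>{n..<n+n}. f j) = (\<Sum>j\<in>{0..<n}. f (n+j))"
    using sum.shift_bounds_nat_ivl[of f 0 n n] by (simp add: add.commute)
  finally show ?thesis .
qed

lemma eig_bound:
  fixes B C :: "real mat" and lam :: complex and z :: "complex vec"
  assumes B: "B \<in> carrier_mat n n" and C: "C \<in> carrier_mat n n"
    and Bnn: "\<forall>i<n. \<forall>j<n. B $$ (i,j) \<ge> 0" and Cnn: "\<forall>i<n. \<forall>j<n. C $$ (i,j) \<ge> 0"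
    and L: "\<And>y. y \<in> carrier_vec n \<Longrightarrow> \<forall>i<n. y $ i \<ge> 0 \<Longrightarrow> \<forall>i<n. ((B + C) *\<^sub>v y) $ i \<ge> y $ i \<Longrightarrow> \<forall>i<n. y $ i = 0"
    and ev: "eigenvector (cmat (four_block_mat B C (1\<^sub>m n) (0\<^sub>m n n))) z lam"
  shows "norm lam < 1"
proof (rule ccontr)
  assume "\<not> norm lam < 1"
  hence lam1: "norm lam \<ge> 1" by simp
  define W where "W = four_block_mat B C (1\<^sub>m n) (0\<^sub>m n n)"
  have W: "W \<in> carrier_mat (n+n) (n+n)" unfolding W_def using B C by auto
  have dW: "dim_row (cmat W) = n + n" "dim_col (cmat W) = n + n" using W unfolding cmat_def by auto
  from ev[folded W_def] have z: "z \<in> carrier_vec (n+n)" and z0: "z \<noteq> 0\<^sub>v (n+n)"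
    and Wz: "cmat W *\<^sub>v z = lam \<cdot>\<^sub>v z" unfolding eigenvector_def dW by auto
  have row: "(cmat W *\<^sub>v z) $ i = (\<Sum>j\<in>{0..<n+n}. complex_of_real (W $$ (i,j)) * z $ j)" if "i < n + n" for i
    using that W z unfolding cmat_def by (simp add: scalar_prod_def)
  have eq2: "z $ k = lam * z $ (n + k)" if k: "k < n" for k
  proof -
    have "lam * z $ (n + k) = (cmat W *\<^sub>v z) $ (n + k)" using Wz z k by simp
    also have "\<dots> = (\<Sum>j\<in>{0..<n}. complex_of_real (W $$ (n+k,j)) * z $ j) + (\<Sum>j\<in>{0..<n}. complex_of_real (W $$ (n+k,n+j)) * z $ (n+j))"
      using row[of "n+k"] k sum_double by simp
    also have "(\<Sum>j\<in>{0..<n}. complex_of_real (W $$ (n+k,n+j)) * z $ (n+j)) = 0"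
      using k B C unfolding W_def by (intro sum.neutral, auto)
    also have "(\<Sum>j\<in>{0..<n}. complex_of_real (W $$ (n+k,j)) * z $ j) = (\<Sum>j\<in>{0..<n}. if j = k then z $ j else 0)"
      using k B C unfolding W_def by (intro sum.cong, auto)
    also have "\<dots> = z $ k" using k by (simp add: sum.delta)
    finally show ?thesis by simp
  qed
  have eq1: "lam * z $ i = (\<Sum>j\<in>{0..<n}. complex_of_real (B $$ (i,j)) * z $ j) + (\<Sum>j\<in>{0..<n}. complex_of_real (C $$ (i,j)) * z $ (n+j))"
    if i: "i < n" for i
  proof -
    have "lam * z $ i = (cmat W *\<^sub>v z) $ i" using Wz z i by simp
    also have "\<dots> = (\<Sum>j\<in>{0..<n}. complex_of_real (W $$ (i,j)) * z $ j) + (\<Sum>j\<in>{0..<n}. complex_of_real (W $$ (i,n+j)) * z $ (n+j))"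
      using row[of i] i sum_double by simp
    also have "(\<Sum>j\<in>{0..<n}. complex_of_real (W $$ (i,j)) * z $ j) = (\<Sum>j\<in>{0..<n}. complex_of_real (B $$ (i,j)) * z $ j)"
      using i B C unfolding W_def by (intro sum.cong, auto)
    also have "(\<Sum>j\<in>{0..<n}. complex_of_real (W $$ (i,n+j)) * z $ (n+j)) = (\<Sum>j\<in>{0..<n}. complex_of_real (C $$ (i,j)) * z $ (n+j))"
      using i B C unfolding W_def by (intro sum.cong, auto)
    finally show ?thesis .
  qed
  have lam0: "lam \<noteq> 0" using lam1 by auto
  have n2: "norm (z $ (n+j)) \<le> norm (z $ j)" if j: "j < n" for j
  proof -
    have "norm (z $ j) = norm lam * norm (z $ (n+j))" using eq2[OF j] by (simp add: norm_mult)
    moreover have "norm (z $ (n+j)) \<le> norm lam * norm (z $ (n+j))"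
      using mult_right_mono[OF lam1, of "norm (z $ (n+j))"] by simp
    ultimately show ?thesis by simp
  qed
  define u where "u = vec n (\<lambda>j. norm (z $ j))"
  have u: "u \<in> carrier_vec n" unfolding u_def by auto
  have unn: "\<forall>i<n. u $ i \<ge> 0" unfolding u_def by auto
  have uD: "\<forall>i<n. ((B + C) *\<^sub>v u) $ i \<ge> u $ i"
  proof (intro allI impI)
    fix i assume i: "i < n"
    have "u $ i \<le> norm lam * u $ i" using mult_right_mono[OF lam1, of "u $ i"] unn i
      by simp
    also have "\<dots> = norm (lam * z $ i)" unfolding u_def using i by (simp add: norm_mult)
    also have "\<dots> \<le> norm (\<Sum>j\<in>{0..<n}. complex_of_real (B $$ (i,j)) * z $ j) + norm (\<Sum>j\<in>{0..<n}. complex_of_real (C $$ (i,j)) * z $ (n+j))"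
      unfolding eq1[OF i] by (rule norm_triangle_ineq)
    also have "\<dots> \<le> (\<Sum>j\<in>{0..<n}. B $$ (i,j) * u $ j) + (\<Sum>j\<in>{0..<n}. C $$ (i,j) * u $ j)"
    proof (rule add_mono)
      show "norm (\<Sum>j\<in>{0..<n}. complex_of_real (B $$ (i,j)) * z $ j) \<le> (\<Sum>j\<in>{0..<n}. B $$ (i,j) * u $ j)"
        by (rule order_trans[OF norm_sum], rule sum_mono, use Bnn i in \<open>auto simp: u_def norm_mult\<close>)
      show "norm (\<Sum>j\<in>{0..<n}. complex_of_real (C $$ (i,j)) * z $ (n+j)) \<le> (\<Sum>j\<in>{0..<n}. C $$ (i,j) * u $ j)"
        by (rule order_trans[OF norm_sum], rule sum_mono, use Cnn i n2 in \<open>auto simp: u_def norm_mult intro!: mult_left_mono\<close>)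
    qed
    also have "\<dots> = (\<Sum>j\<in>{0..<n}. (B $$ (i,j) + C $$ (i,j)) * u $ j)"
      by (simp only: sum.distrib distrib_right)
    also have "\<dots> = ((B + C) *\<^sub>v u) $ i" using B C u i
      by (simp add: scalar_prod_def)
    finally show "((B + C) *\<^sub>v u) $ i \<ge> u $ i" .
  qed
  have "\<forall>i<n. u $ i = 0" by (rule L[OF u unn uD])
  hence z1: "\<forall>j<n. z $ j = 0" unfolding u_def by auto
  have "z = 0\<^sub>v (n+n)"
  proof (rule eq_vecI)
    fix i assume "i < dim_vec (0\<^sub>v (n+n) :: complex vec)"
    hence i: "i < n + n" by simp
    show "z $ i = 0\<^sub>v (n+n) $ i"
    proof (cases "i < n")
      case True thus ?thesis using z1 i by simp
    next
      case False
      then obtain k where k: "k < n" "i = n + k" using i by (metis add_diff_inverse_nat add_less_cancel_left)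
      have "lam * z $ (n+k) = 0" using eq2[OF k(1)] z1 k by simp
      thus ?thesis using lam0 k i by simp
    qed
  qed (use z in auto)
  thus False using z0 by simp
qed

lemma cmat_mult_vec:
  fixes M :: "real mat" and v :: "real vec"
  assumes "M \<in> carrier_mat r c" "v \<in> carrier_vec c"
  shows "cmat M *\<^sub>v map_vec complex_of_real v = map_vec complex_of_real (M *\<^sub>v v)"
  using assms unfolding cmat_def by (intro eq_vecI, auto simp: scalar_prod_def)

lemma no_fixed_vec:
  fixes M :: "real mat" and v :: "real vec"
  assumes M: "M \<in> carrier_mat r r" and v: "v \<in> carrier_vec r"
    and sp: "1 \<notin> spectrum (cmat M)" and fx: "M *\<^sub>v v = v"
  shows "v = 0\<^sub>v r"
proof (rule ccontr)
  assume nz: "v \<noteq> 0\<^sub>v r"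
  define w where "w = map_vec complex_of_real v"
  have w: "w \<in> carrier_vec r" unfolding w_def using v by auto
  have "w \<noteq> 0\<^sub>v r"
  proof
    assume "w = 0\<^sub>v r"
    hence "v = 0\<^sub>v r" unfolding w_def using v by (intro eq_vecI, auto dest!: arg_cong[where f="\<lambda>x. x $ _"])
    thus False using nz by simp
  qed
  moreover have "cmat M *\<^sub>v w = 1 \<cdot>\<^sub>v w" unfolding w_def using cmat_mult_vec[OF M v] fx by simp
  moreover have "dim_row (cmat M) = r" using M unfolding cmat_def by simp
  ultimately have "eigenvector (cmat M) w 1" unfolding eigenvector_def using w by simp
  hence "1 \<in> spectrum (cmat M)" unfolding spectrum_def eigenvalue_def by auto
  thus False using sp by simp
qed

lemma range_P_fix:
  fixes P X :: "real mat" and w :: "real vec"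
  assumes mp: "is_moore_penrose P X" and P: "P \<in> carrier_mat r c" and w: "w \<in> mat_range P"
  shows "P *\<^sub>v (X *\<^sub>v w) = w"
proof -
  obtain x where x: "x \<in> carrier_vec c" and wx: "w = P *\<^sub>v x" using w P unfolding mat_range_def by auto
  have X: "X \<in> carrier_mat c r" and PXP: "P * X * P = P" using mp P unfolding is_moore_penrose_def by auto
  have "P *\<^sub>v (X *\<^sub>v w) = (P * X * P) *\<^sub>v x" unfolding wx using P X x
    by (simp add: massocv carrier_matD carrier_vecD)
  thus ?thesis using PXP wx by simp
qed

lemma lin_comb_aux:
  fixes a b c e f :: "real mat"
  assumes "a \<in> carrier_mat n n" "b \<in> carrier_mat n n" "c \<in> carrier_mat n n" "e \<in> carrier_mat n n" "f \<in> carrier_mat n n"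
  shows "(b - e) + f = a - ((a - b + c) - (c - e + f))"
  using assms by (intro eq_matI, auto)

lemma prod_nonpos:
  fixes M1 M2 :: "real mat"
  assumes M2: "M2 \<in> carrier_mat n k" and M1: "M1 \<in> carrier_mat k n"
    and n2: "\<forall>i<n. \<forall>j<k. M2 $$ (i,j) \<le> 0" and n1: "\<forall>i<k. \<forall>j<n. M1 $$ (i,j) \<ge> 0"
    and i: "i < n" and j: "j < n"
  shows "(M2 * M1) $$ (i,j) \<le> 0"
proof -
  have "(M2 * M1) $$ (i,j) = (\<Sum>l\<in>{0..<k}. M2 $$ (i,l) * M1 $$ (l,j))" using M1 M2 i j by (simp add: scalar_prod_def)
  also have "\<dots> \<le> 0" using n1 n2 i j by (intro sum_nonpos, simp add: mult_nonpos_nonneg)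
  finally show ?thesis .
qed

lemma prod_nonneg2:
  fixes M1 M2 :: "real mat"
  assumes M2: "M2 \<in> carrier_mat n k" and M1: "M1 \<in> carrier_mat k n"
    and n2: "\<forall>i<n. \<forall>j<k. M2 $$ (i,j) \<le> 0" and n1: "\<forall>i<k. \<forall>j<n. M1 $$ (i,j) \<le> 0"
    and i: "i < n" and j: "j < n"
  shows "(M2 * M1) $$ (i,j) \<ge> 0"
proof -
  have "(M2 * M1) $$ (i,j) = (\<Sum>l\<in>{0..<k}. M2 $$ (i,l) * M1 $$ (l,j))" using M1 M2 i j by (simp add: scalar_prod_def)
  also have "\<dots> \<ge> 0" using n1 n2 i j by (intro sum_nonneg, simp add: mult_nonpos_nonpos)
  finally show ?thesis .
qed

theorem theorem3p2:
  fixes A P1 R1 S1 P2 R2 S2 :: "real mat" and m n :: nat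
  assumes "0 < m" and "0 < n"
    and "A \<in> carrier_mat m n"
    and "double_proper_weak_splitting A P1 R1 S1"
    and "double_proper_weak_splitting A P2 R2 S2"
    and "mat_nonneg (mp_inverse ((1\<^sub>m m - S2 * mp_inverse P1) * A) * P2)"
    and "mat_null P2 \<subseteq> mat_null S2"
    and "mat_range S2 \<subseteq> mat_range P2"
    and "1 \<notin> spectrum (cmat (S2 * mp_inverse P1))"
  shows "spectral_radius (cmat (four_block_mat
            (mp_inverse P2 * R2 - mp_inverse P2 * S2 * mp_inverse P1 * R1)
            (mp_inverse P2 * S2 * mp_inverse P1 * S1)
            (1\<^sub>m n) (0\<^sub>m n n))) < 1"
proof -
  note as = assms
  have A: "A \<in> carrier_mat m n" by fact
  from as(4) A have P1: "P1 \<in> carrier_mat m n" and R1: "R1 \<in> carrier_mat m n" and S1: "S1 \<in> carrier_mat m n"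
    and A1: "A = P1 - R1 + S1" and rg1: "mat_range P1 = mat_range A" and nl1: "mat_null P1 = mat_null A"
    and nn1: "mat_nonneg (mp_inverse P1 * R1)" and np1: "mat_nonpos (mp_inverse P1 * S1)"
    unfolding double_proper_weak_splitting_def double_proper_splitting_def by auto
  from as(5) A have P2: "P2 \<in> carrier_mat m n" and R2: "R2 \<in> carrier_mat m n" and S2: "S2 \<in> carrier_mat m n"
    and A2: "A = P2 - R2 + S2" and rg2: "mat_range P2 = mat_range A" and nl2: "mat_null P2 = mat_null A"
    and nn2: "mat_nonneg (mp_inverse P2 * R2)" and np2: "mat_nonpos (mp_inverse P2 * S2)"
    unfolding double_proper_weak_splitting_def double_proper_splitting_def by auto
  define X1 where "X1 = mp_inverse P1"
  define X2 where "X2 = mp_inverse P2"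
  define Ah where "Ah = (1\<^sub>m m - S2 * X1) * A"
  define Xh where "Xh = mp_inverse Ah"
  have mp1: "is_moore_penrose P1 X1" unfolding X1_def by (rule mp_exists[OF P1])
  have mp2: "is_moore_penrose P2 X2" unfolding X2_def by (rule mp_exists[OF P2])
  have X1: "X1 \<in> carrier_mat n m" using mp1 P1 unfolding is_moore_penrose_def by auto
  have X2: "X2 \<in> carrier_mat n m" using mp2 P2 unfolding is_moore_penrose_def by auto
  have Ah: "Ah \<in> carrier_mat m n" unfolding Ah_def using S2 X1 A by auto
  have mph: "is_moore_penrose Ah Xh" unfolding Xh_def by (rule mp_exists[OF Ah])
  have Xh: "Xh \<in> carrier_mat n m" using mph Ah unfolding is_moore_penrose_def by auto
  note cars = A P1 R1 S1 P2 R2 S2 X1 X2 Ah Xh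
  have ds: "dim_row A = m" "dim_col A = n" "dim_row P1 = m" "dim_col P1 = n" "dim_row R1 = m" "dim_col R1 = n"
    "dim_row S1 = m" "dim_col S1 = n" "dim_row P2 = m" "dim_col P2 = n" "dim_row R2 = m" "dim_col R2 = n"
    "dim_row S2 = m" "dim_col S2 = n" "dim_row X1 = n" "dim_col X1 = m" "dim_row X2 = n" "dim_col X2 = m"
    "dim_row Ah = m" "dim_col Ah = n" "dim_row Xh = n" "dim_col Xh = m"
    using cars by auto
  have Ahv: "Ah *\<^sub>v x = A *\<^sub>v x - S2 *\<^sub>v (X1 *\<^sub>v (A *\<^sub>v x))" if x: "x \<in> carrier_vec n" for x
  proof -
    have "Ah *\<^sub>v x = (1\<^sub>m m - S2 * X1) *\<^sub>v (A *\<^sub>v x)" unfolding Ah_def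
      using x ds by (simp add: massocv carrier_vecD)
    also have "\<dots> = 1\<^sub>m m *\<^sub>v (A *\<^sub>v x) - (S2 * X1) *\<^sub>v (A *\<^sub>v x)"
      using x cars by (intro minus_mult_distrib_mat_vec[of _ m m], auto)
    also have "\<dots> = A *\<^sub>v x - S2 *\<^sub>v (X1 *\<^sub>v (A *\<^sub>v x))"
      using x ds one_mult_mat_vec[of "A *\<^sub>v x" m] A by (simp add: massocv carrier_vecD)
    finally show ?thesis .
  qed
  have F1: "S2 * X1 * P1 = S2"
  proof (rule mat_ext_vec[of _ m n])
    fix x :: "real vec" assume x: "x \<in> carrier_vec n"
    define y where "y = x - X1 *\<^sub>v (P1 *\<^sub>v x)"
    have y: "y \<in> carrier_vec n" unfolding y_def using x cars by auto
    have PXP: "P1 * X1 * P1 = P1" using mp1 unfolding is_moore_penrose_def by auto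
    have "P1 *\<^sub>v y = P1 *\<^sub>v x - P1 *\<^sub>v (X1 *\<^sub>v (P1 *\<^sub>v x))" unfolding y_def
      using x cars by (intro mult_minus_distrib_mat_vec[of _ m n], auto)
    also have "P1 *\<^sub>v (X1 *\<^sub>v (P1 *\<^sub>v x)) = (P1 * X1 * P1) *\<^sub>v x"
      using x ds by (simp add: massocv carrier_vecD)
    finally have "P1 *\<^sub>v y = 0\<^sub>v m" using PXP x P1 by simp
    hence "y \<in> mat_null P1" unfolding mat_null_def mat_kernel_def using y ds by simp
    hence "y \<in> mat_null S2" using as(7) nl1 nl2 by auto
    hence "S2 *\<^sub>v y = 0\<^sub>v m" unfolding mat_null_def mat_kernel_def using ds by simp
    hence "S2 *\<^sub>v x - S2 *\<^sub>v (X1 *\<^sub>v (P1 *\<^sub>v x)) = 0\<^sub>v m" unfolding y_def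
      using x cars by (simp add: mult_minus_distrib_mat_vec[of _ m n])
    hence "S2 *\<^sub>v x = S2 *\<^sub>v (X1 *\<^sub>v (P1 *\<^sub>v x))"
      by (rule vec_minus_zero[of _ m, rotated 2]) (use x cars in auto)
    thus "(S2 * X1 * P1) *\<^sub>v x = S2 *\<^sub>v x" using x ds by (simp add: massocv carrier_vecD)
  qed (use cars in auto)
  have F2: "P2 * X2 * Ah = Ah"
  proof (rule mat_ext_vec[of _ m n])
    fix x :: "real vec" assume x: "x \<in> carrier_vec n"
    have "A *\<^sub>v x \<in> mat_range A" unfolding mat_range_def using x ds by auto
    hence "A *\<^sub>v x \<in> mat_range P2" using rg2 by simp
    then obtain a where a: "a \<in> carrier_vec n" "A *\<^sub>v x = P2 *\<^sub>v a" unfolding mat_range_def using ds by auto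
    have "S2 *\<^sub>v (X1 *\<^sub>v (A *\<^sub>v x)) \<in> mat_range S2" unfolding mat_range_def
      by (rule CollectI, rule exI[of _ "X1 *\<^sub>v (A *\<^sub>v x)"]) (use x cars in auto)
    hence "S2 *\<^sub>v (X1 *\<^sub>v (A *\<^sub>v x)) \<in> mat_range P2" using as(8) by auto
    then obtain b where b: "b \<in> carrier_vec n" "S2 *\<^sub>v (X1 *\<^sub>v (A *\<^sub>v x)) = P2 *\<^sub>v b" unfolding mat_range_def using ds by auto
    have "Ah *\<^sub>v x = P2 *\<^sub>v (a - b)" unfolding Ahv[OF x] a b using a b P2
      by (simp add: mult_minus_distrib_mat_vec[of _ m n])
    hence "Ah *\<^sub>v x \<in> mat_range P2" unfolding mat_range_def using a b ds by auto
    hence "P2 *\<^sub>v (X2 *\<^sub>v (Ah *\<^sub>v x)) = Ah *\<^sub>v x" by (rule range_P_fix[OF mp2 P2])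
    thus "(P2 * X2 * Ah) *\<^sub>v x = Ah *\<^sub>v x" using x ds by (simp add: massocv carrier_vecD)
  qed (use cars in auto)
  have F3: "Xh * Ah = X2 * P2"
  proof (rule mp_proj_eq[OF Ah P2 mph mp2])
    fix x :: "real vec" assume x: "x \<in> carrier_vec n"
    show "P2 *\<^sub>v x = 0\<^sub>v m \<longleftrightarrow> Ah *\<^sub>v x = 0\<^sub>v m"
    proof
      assume "P2 *\<^sub>v x = 0\<^sub>v m"
      hence "x \<in> mat_null P2" unfolding mat_null_def mat_kernel_def using x ds by simp
      hence "x \<in> mat_null A" using nl2 by simp
      hence "A *\<^sub>v x = 0\<^sub>v m" unfolding mat_null_def mat_kernel_def using ds by simp
      moreover have "X1 *\<^sub>v 0\<^sub>v m = 0\<^sub>v n" by (intro eq_vecI) (use X1 in auto)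
      moreover have "S2 *\<^sub>v 0\<^sub>v n = 0\<^sub>v m" by (intro eq_vecI) (use S2 in auto)
      ultimately show "Ah *\<^sub>v x = 0\<^sub>v m" unfolding Ahv[OF x] using cars by simp
    next
      assume "Ah *\<^sub>v x = 0\<^sub>v m"
      hence "A *\<^sub>v x - (S2 * X1) *\<^sub>v (A *\<^sub>v x) = 0\<^sub>v m" unfolding Ahv[OF x] using x ds
        by (simp add: massocv carrier_vecD)
      hence "(S2 * X1) *\<^sub>v (A *\<^sub>v x) = A *\<^sub>v x"
        by (rule vec_minus_zero[of _ m, rotated 2, symmetric]) (use x cars in auto)
      hence "A *\<^sub>v x = 0\<^sub>v m" using no_fixed_vec[of "S2 * X1" m "A *\<^sub>v x"] as(9) x cars
        unfolding X1_def by auto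
      hence "x \<in> mat_null A" unfolding mat_null_def mat_kernel_def using x ds by simp
      hence "x \<in> mat_null P2" using nl2 by simp
      thus "P2 *\<^sub>v x = 0\<^sub>v m" unfolding mat_null_def mat_kernel_def using ds by simp
    qed
  qed
  define B where "B = X2 * R2 - X2 * S2 * X1 * R1"
  define C where "C = X2 * S2 * X1 * S1"
  define D where "D = B + C"
  define Q where "Q = X2 * P2"
  define T where "T = Xh * P2"
  have B: "B \<in> carrier_mat n n" and C: "C \<in> carrier_mat n n" and D: "D \<in> carrier_mat n n"
    and Q: "Q \<in> carrier_mat n n" and T: "T \<in> carrier_mat n n"
    unfolding B_def C_def D_def Q_def T_def using cars by auto
  have e1: "X2 * Ah = X2 * A - X2 * S2 * X1 * A"
  proof -
    have "Ah = 1\<^sub>m m * A - S2 * X1 * A" unfolding Ah_def using cars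
      by (intro minus_mult_distrib_mat[of _ m m], auto)
    also have "\<dots> = A - S2 * X1 * A" using ds by simp
    finally have "X2 * Ah = X2 * (A - S2 * X1 * A)" by simp
    also have "\<dots> = X2 * A - X2 * (S2 * X1 * A)" using cars
      by (intro mult_minus_distrib_mat[of _ n m _ n], auto)
    also have "X2 * (S2 * X1 * A) = X2 * S2 * X1 * A" using ds by (simp add: massoc del: assoc_mult_mat)
    finally show ?thesis .
  qed
  have e2: "X2 * A = X2 * P2 - X2 * R2 + X2 * S2"
  proof -
    have "X2 * A = X2 * (P2 - R2) + X2 * S2" unfolding A2 using cars
      by (intro mult_add_distrib_mat[of _ n m _ n], auto)
    also have "X2 * (P2 - R2) = X2 * P2 - X2 * R2" using cars
      by (intro mult_minus_distrib_mat[of _ n m _ n], auto)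
    finally show ?thesis .
  qed
  have e3: "X2 * S2 * X1 * A = X2 * S2 - X2 * S2 * X1 * R1 + X2 * S2 * X1 * S1"
  proof -
    have c4: "X2 * S2 * X1 \<in> carrier_mat n m" using cars by auto
    have "X2 * S2 * X1 * A = X2 * S2 * X1 * (P1 - R1) + X2 * S2 * X1 * S1" unfolding A1 using cars c4
      by (intro mult_add_distrib_mat[of _ n m _ n], auto)
    also have "X2 * S2 * X1 * (P1 - R1) = X2 * S2 * X1 * P1 - X2 * S2 * X1 * R1" using cars c4
      by (intro mult_minus_distrib_mat[of _ n m _ n], auto)
    also have "X2 * S2 * X1 * P1 = X2 * (S2 * X1 * P1)" using ds by (simp add: massoc del: assoc_mult_mat)
    also have "\<dots> = X2 * S2" using F1 by simp
    finally show ?thesis .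
  qed
  have F4: "D = X2 * P2 - X2 * Ah"
    unfolding D_def B_def C_def e1 e2 e3 using cars by (intro lin_comb_aux[of _ n], auto)
  have PXP2: "P2 * X2 * P2 = P2" and XPX2: "X2 * P2 * X2 = X2" using mp2 unfolding is_moore_penrose_def by auto
  have TD: "T * D = T - Q"
  proof -
    have "T * D = Xh * P2 * (X2 * P2) - Xh * P2 * (X2 * Ah)" unfolding F4 T_def using cars
      by (intro mult_minus_distrib_mat[of _ n n _ n], auto)
    also have "Xh * P2 * (X2 * P2) = Xh * (P2 * X2 * P2)" using ds by (simp add: massoc del: assoc_mult_mat)
    also have "Xh * P2 * (X2 * Ah) = Xh * (P2 * X2 * Ah)" using ds by (simp add: massoc del: assoc_mult_mat)
    finally show ?thesis using PXP2 F2 F3 unfolding T_def Q_def by simp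
  qed
  have QD: "Q * D = D"
  proof -
    have "Q * D = X2 * P2 * (X2 * P2) - X2 * P2 * (X2 * Ah)" unfolding F4 Q_def using cars
      by (intro mult_minus_distrib_mat[of _ n n _ n], auto)
    also have "X2 * P2 * (X2 * P2) = (X2 * P2 * X2) * P2" using ds by (simp add: massoc del: assoc_mult_mat)
    also have "X2 * P2 * (X2 * Ah) = (X2 * P2 * X2) * Ah" using ds by (simp add: massoc del: assoc_mult_mat)
    finally show ?thesis using XPX2 F4 by simp
  qed
  define M1 where "M1 = X1 * R1"
  define M2 where "M2 = X2 * S2"
  define M3 where "M3 = X1 * S1"
  define M4 where "M4 = X2 * R2"
  have M1: "M1 \<in> carrier_mat n n" and M2: "M2 \<in> carrier_mat n n" and M3: "M3 \<in> carrier_mat n n"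
    and M4: "M4 \<in> carrier_mat n n" unfolding M1_def M2_def M3_def M4_def using cars by auto
  have nM1: "\<forall>i<n. \<forall>j<n. M1 $$ (i,j) \<ge> 0" using nn1 M1 unfolding M1_def[symmetric] X1_def[symmetric] mat_nonneg_def by auto
  have nM2: "\<forall>i<n. \<forall>j<n. M2 $$ (i,j) \<le> 0" using np2 M2 unfolding M2_def[symmetric] X2_def[symmetric] mat_nonpos_def by auto
  have nM3: "\<forall>i<n. \<forall>j<n. M3 $$ (i,j) \<le> 0" using np1 M3 unfolding M3_def[symmetric] X1_def[symmetric] mat_nonpos_def by auto
  have nM4: "\<forall>i<n. \<forall>j<n. M4 $$ (i,j) \<ge> 0" using nn2 M4 unfolding M4_def[symmetric] X2_def[symmetric] mat_nonneg_def by auto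
  have Beq: "B = M4 - M2 * M1" unfolding B_def M1_def M2_def M4_def using ds by (simp add: massoc del: assoc_mult_mat)
  have Ceq: "C = M2 * M3" unfolding C_def M2_def M3_def using ds by (simp add: massoc del: assoc_mult_mat)
  have Bnn: "\<forall>i<n. \<forall>j<n. B $$ (i,j) \<ge> 0"
  proof (intro allI impI)
    fix i j assume i: "i < n" and j: "j < n"
    have "(M2 * M1) $$ (i,j) \<le> 0" by (rule prod_nonpos[OF M2 M1 nM2 nM1 i j])
    moreover have "M4 $$ (i,j) \<ge> 0" using nM4 i j by auto
    ultimately show "B $$ (i,j) \<ge> 0" unfolding Beq using i j M1 M2 M4 by simp
  qed
  have Cnn: "\<forall>i<n. \<forall>j<n. C $$ (i,j) \<ge> 0"
    unfolding Ceq using prod_nonneg2[OF M2 M3 nM2 nM3] by blast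
  have Dnn: "\<forall>i<n. \<forall>j<n. D $$ (i,j) \<ge> 0" using Bnn Cnn B C unfolding D_def by auto
  have "mat_nonneg T" using as(6) unfolding T_def Xh_def Ah_def X1_def .
  hence Tnn: "\<forall>i<n. \<forall>j<n. T $$ (i,j) \<ge> 0" using T unfolding mat_nonneg_def by auto
  have L: "\<forall>i<n. y $ i = 0" if "y \<in> carrier_vec n" "\<forall>i<n. y $ i \<ge> 0" "\<forall>i<n. ((B + C) *\<^sub>v y) $ i \<ge> y $ i" for y
    using lemL[OF D T Q Dnn Tnn TD QD] that unfolding D_def by blast
  define W where "W = cmat (four_block_mat B C (1\<^sub>m n) (0\<^sub>m n n))"
  have W: "W \<in> carrier_mat (n+n) (n+n)" unfolding W_def cmat_def using B C by auto
  have "spectral_radius W \<in> norm ` spectrum W" using spectral_radius_mem_max(1)[OF W] as(2) by simp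
  then obtain lam where "lam \<in> spectrum W" and sr: "spectral_radius W = norm lam" by auto
  then obtain z where "eigenvector W z lam" unfolding spectrum_def eigenvalue_def by auto
  hence "norm lam < 1" using eig_bound[OF B C Bnn Cnn L] unfolding W_def by blast
  thus ?thesis using sr unfolding W_def B_def C_def X1_def X2_def by simp
qed

end
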